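(* Let $\mathbb{F}$ be a finite field. For every $k\in\mathbb{N}$ there exists a CMSO formula $\mathrm{Dep}(X,\langle Y^1\rangle,\dots,\langle Y^k\rangle)$ over $\Sigma_{\mathbb{F}}$ such that for every matrix $A$ over $\mathbb{F}$, every set $S$ of columns of $A$ and all virtual columns $\langle Q^1\rangle,\dots,\langle Q^k\rangle$ of $\mathcal{S}(A)$, the set $S$ is linearly dependent with respect to $v(\langle Q^1\rangle),\dots,v(\langle Q^k\rangle)$ if and only if $\mathcal{S}(A)\models\mathrm{Dep}(S,\langle Q^1\rangle,\dots,\langle Q^k\rangle)$.
   Context: $\Sigma_{\mathbb{F}}$ has unary symbols $R,C$ and binary symbols $\mathrm{Entry}_\alpha$ ($\alpha\in\mathbb{F}$). For a matrix $A$ with rows $r_1,\dots,r_m$, $\mathcal{S}(A)$ has universe rows $\cup$ columns, $R$ = rows, $C$ = columns, $\mathrm{Entry}_\alpha=\{(r,c):A(r,c)=\alpha\}$. CMSO is monadic second-order logic with predicates $\mathrm{mod}_{a,b}(X)$ meaning $|X|\equiv a\pmod b$. A virtual column is a family $\langle Q\rangle=\{Q_\alpha\}_{\alpha\in\mathbb{F}}$ of pairwise disjoint sets of rows covering all rows, with vector $v(\langle Q\rangle)\in\mathbb{F}^m$ whose $i$-th coordinate is $\alpha$ where $r_i\in Q_\alpha$; in formulas it is an $\mathbb{F}$-indexed tuple of set variables. A set $\{u_1,\dots,u_\ell\}$ of columns (vectors of $\mathbb{F}^m$) is dependent with respect to $v_1,\dots,v_k\in\mathbb{F}^m$ if there exist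 $\alpha_1,\dots,\alpha_\ell\in\mathbb{F}$, not all $0$, with $\sum_i\alpha_iu_i\in\mathrm{span}(v_1,\dots,v_k)$. *)

theory Defs
  imports Main
begin

datatype elem = Row nat | Col nat

record ('u, 'f) sigma_struct =
  univ :: "'u set"
  relR :: "'u set"
  relC :: "'u set"
  relEntry :: "'f \<Rightarrow> ('u \<times> 'u) set"

datatype ('f, 'v) cmso =
    AtR nat
  | AtC nat
  | AtEntry 'f nat nat
  | AtEq nat nat
  | AtMem nat 'v
  | AtMod nat nat 'v
  | FFalse
  | Neg "('f, 'v) cmso"
  | Conj "('f, 'v) cmso" "('f, 'v) cmso"
  | Disj "('f, 'v) cmso" "('f, 'v) cmso"
  | Ex1 nat "('f, 'v) cmso"
  | All1 nat "('f, 'v) cmso"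
  | ExS 'v "('f, 'v) cmso"
  | AllS 'v "('f, 'v) cmso"

fun sat :: "('u, 'f) sigma_struct \<Rightarrow> (nat \<Rightarrow> 'u) \<Rightarrow> ('v \<Rightarrow> 'u set) \<Rightarrow> ('f, 'v) cmso \<Rightarrow> bool" where
  "sat M \<nu> \<sigma> (AtR x) = (\<nu> x \<in> relR M)"
| "sat M \<nu> \<sigma> (AtC x) = (\<nu> x \<in> relC M)"
| "sat M \<nu> \<sigma> (AtEntry \<alpha> x y) = ((\<nu> x, \<nu> y) \<in> relEntry M \<alpha>)"
| "sat M \<nu> \<sigma> (AtEq x y) = (\<nu> x = \<nu> y)"
| "sat M \<nu> \<sigma> (AtMem x X) = (\<nu> x \<in> \<sigma> X)"
| "sat M \<nu> \<sigma> (AtMod a b X) = (card (\<sigma> X) mod b = a mod b)"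
| "sat M \<nu> \<sigma> FFalse = False"
| "sat M \<nu> \<sigma> (Neg \<phi>) = (\<not> sat M \<nu> \<sigma> \<phi>)"
| "sat M \<nu> \<sigma> (Conj \<phi> \<psi>) = (sat M \<nu> \<sigma> \<phi> \<and> sat M \<nu> \<sigma> \<psi>)"
| "sat M \<nu> \<sigma> (Disj \<phi> \<psi>) = (sat M \<nu> \<sigma> \<phi> \<or> sat M \<nu> \<sigma> \<psi>)"
| "sat M \<nu> \<sigma> (Ex1 x \<phi>) = (\<exists>a\<in>univ M. sat M (\<nu>(x := a)) \<sigma> \<phi>)"
| "sat M \<nu> \<sigma> (All1 x \<phi>) = (\<forall>a\<in>univ M. sat M (\<nu>(x := a)) \<sigma> \<phi>)"
| "sat M \<nu> \<sigma> (ExS X \<phi>) = (\<exists>B. B \<subseteq> univ M \<and> sat M \<nu> (\<sigma>(X := B)) \<phi>)"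
| "sat M \<nu> \<sigma> (AllS X \<phi>) = (\<forall>B. B \<subseteq> univ M \<longrightarrow> sat M \<nu> (\<sigma>(X := B)) \<phi>)"

definition matrix_struct :: "nat \<Rightarrow> nat \<Rightarrow> (nat \<Rightarrow> nat \<Rightarrow> 'f) \<Rightarrow> (elem, 'f) sigma_struct" where
  "matrix_struct m n A =
     \<lparr> univ = Row ` {..<m} \<union> Col ` {..<n},
       relR = Row ` {..<m},
       relC = Col ` {..<n},
       relEntry = (\<lambda>\<alpha>. {(Row r, Col c) | r c. r < m \<and> c < n \<and> A r c = \<alpha>}) \<rparr>"

definition virtual_column :: "nat \<Rightarrow> ('f \<Rightarrow> elem set) \<Rightarrow> bool" where
  "virtual_column m Q \<longleftrightarrow>
     (\<forall>\<alpha>. Q \<alpha> \<subseteq> Row ` {..<m}) \<and>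
     (\<forall>\<alpha> \<beta>. \<alpha> \<noteq> \<beta> \<longrightarrow> Q \<alpha> \<inter> Q \<beta> = {}) \<and>
     (\<Union>\<alpha>. Q \<alpha>) = Row ` {..<m}"

definition vvec :: "('f \<Rightarrow> elem set) \<Rightarrow> nat \<Rightarrow> 'f" where
  "vvec Q r = (THE \<alpha>. Row r \<in> Q \<alpha>)"

definition dependent_wrt ::
  "nat \<Rightarrow> (nat \<Rightarrow> nat \<Rightarrow> 'f::field) \<Rightarrow> nat set \<Rightarrow> (nat \<Rightarrow> nat \<Rightarrow> 'f) \<Rightarrow> nat \<Rightarrow> bool" where
  "dependent_wrt m A S v k \<longleftrightarrow>
     (\<exists>a :: nat \<Rightarrow> 'f. (\<exists>c\<in>S. a c \<noteq> 0) \<and>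
        (\<exists>b :: nat \<Rightarrow> 'f. \<forall>r<m. (\<Sum>c\<in>S. a c * A r c) = (\<Sum>i<k. b i * v i r)))"

text \<open>Names of the free set variables of Dep: X and the F-indexed tuples Y^i.\<close>
datatype 'f svar = SX | SY nat 'f | SB nat

end

theory Submission
  imports Defs
begin


definition univ_list :: "'a list" where "univ_list = (SOME xs. set xs = UNIV)"

lemma set_univ_list[simp]: "set (univ_list :: 'a::finite list) = UNIV"
  unfolding univ_list_def by (rule someI_ex) (rule finite_list[OF finite_UNIV])

definition idx :: "'a \<Rightarrow> nat" where "idx = (SOME h. inj h)"

lemma inj_idx: "inj (idx :: 'a::finite \<Rightarrow> nat)"
proof -
  obtain f :: "'a \<Rightarrow> nat" and n where "inj_on f UNIV"
    using finite_imp_inj_to_nat_seg[OF finite_UNIV[where 'a='a]] by blast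
  then show ?thesis unfolding idx_def by (rule someI[where P=inj])
qed

definition dm :: "'a::semiring_1 itself \<Rightarrow> nat" where
  "dm T = (SOME d. d > 0 \<and> (of_nat d :: 'a) = 0)"

lemma ex_dm: "\<exists>d>0. (of_nat d :: 'a::{finite,ring_1}) = 0"
proof -
  have "\<not> inj (of_nat :: nat \<Rightarrow> 'a)"
  proof
    assume "inj (of_nat :: nat \<Rightarrow> 'a)"
    then have "infinite (range (of_nat :: nat \<Rightarrow> 'a))"
      using finite_imageD infinite_UNIV_nat by blast
    then show False by simp
  qed
  then obtain i j where ij: "(of_nat i :: 'a) = of_nat j" "i \<noteq> j" unfolding inj_def by blast
  show ?thesis
  proof (cases "i < j")
    case True
    have "(of_nat j :: 'a) = of_nat i + of_nat (j - i)" using True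
      by (metis le_add_diff_inverse less_imp_le of_nat_add)
    then have "(of_nat (j-i) :: 'a) = 0" using ij by simp
    then show ?thesis using True by (intro exI[of _ "j-i"]) simp
  next
    case False
    then have F: "j < i" using ij by simp
    have "(of_nat i :: 'a) = of_nat j + of_nat (i - j)" using F
      by (metis le_add_diff_inverse less_imp_le of_nat_add)
    then have "(of_nat (i-j) :: 'a) = 0" using ij by simp
    then show ?thesis using F by (intro exI[of _ "i-j"]) simp
  qed
qed

lemma dm_pos: "dm TYPE('a::{finite,ring_1}) > 0"
  and dm_zero: "(of_nat (dm TYPE('a::{finite,ring_1})) :: 'a) = 0"
  unfolding dm_def using someI_ex[OF ex_dm[where 'a='a]] by auto

lemma of_nat_mod_dm: "(of_nat (N mod dm TYPE('a::{finite,ring_1})) :: 'a) = of_nat N"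
proof -
  let ?d = "dm TYPE('a)"
  have "(of_nat N :: 'a) = of_nat (N mod ?d + ?d * (N div ?d))" by simp
  also have "\<dots> = of_nat (N mod ?d)" by (simp only: of_nat_add of_nat_mult dm_zero) simp
  finally show ?thesis by simp
qed

fun bigOr :: "('f,'v) cmso list \<Rightarrow> ('f,'v) cmso" where
  "bigOr [] = FFalse" | "bigOr (x#xs) = Disj x (bigOr xs)"
fun bigAnd :: "('f,'v) cmso list \<Rightarrow> ('f,'v) cmso" where
  "bigAnd [] = Neg FFalse" | "bigAnd (x#xs) = Conj x (bigAnd xs)"
fun exSs :: "'v list \<Rightarrow> ('f,'v) cmso \<Rightarrow> ('f,'v) cmso" where
  "exSs [] \<phi> = \<phi>" | "exSs (v#vs) \<phi> = ExS v (exSs vs \<phi>)"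

lemma sat_bigOr[simp]: "sat M \<nu> \<sigma> (bigOr xs) \<longleftrightarrow> (\<exists>\<phi>\<in>set xs. sat M \<nu> \<sigma> \<phi>)"
  by (induction xs) auto
lemma sat_bigAnd[simp]: "sat M \<nu> \<sigma> (bigAnd xs) \<longleftrightarrow> (\<forall>\<phi>\<in>set xs. sat M \<nu> \<sigma> \<phi>)"
  by (induction xs) auto

lemma sat_exSs: "sat M \<nu> \<sigma> (exSs vs \<phi>) \<longleftrightarrow>
  (\<exists>B. (\<forall>v\<in>set vs. B v \<subseteq> univ M) \<and> sat M \<nu> (\<lambda>v. if v \<in> set vs then B v else \<sigma> v) \<phi>)"
proof (induction vs arbitrary: \<sigma>)
  case Nil
  then show ?case by simp
next
  case (Cons v vs)
  show ?case
  proof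
    assume "sat M \<nu> \<sigma> (exSs (v # vs) \<phi>)"
    then obtain B0 B where B: "B0 \<subseteq> univ M" "\<forall>u\<in>set vs. B u \<subseteq> univ M"
      "sat M \<nu> (\<lambda>u. if u \<in> set vs then B u else (\<sigma>(v := B0)) u) \<phi>"
      using Cons by auto
    let ?B = "\<lambda>u. if u \<in> set vs then B u else B0"
    have "(\<lambda>u. if u \<in> set (v#vs) then ?B u else \<sigma> u) = (\<lambda>u. if u \<in> set vs then B u else (\<sigma>(v := B0)) u)"
      by (auto simp: fun_eq_iff)
    then show "\<exists>B. (\<forall>v\<in>set (v # vs). B v \<subseteq> univ M) \<and>
      sat M \<nu> (\<lambda>va. if va \<in> set (v # vs) then B va else \<sigma> va) \<phi>"
      using B by (intro exI[of _ ?B]) auto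
  next
    assume "\<exists>B. (\<forall>v\<in>set (v # vs). B v \<subseteq> univ M) \<and>
      sat M \<nu> (\<lambda>va. if va \<in> set (v # vs) then B va else \<sigma> va) \<phi>"
    then obtain B where B: "\<forall>u\<in>set (v # vs). B u \<subseteq> univ M"
      "sat M \<nu> (\<lambda>va. if va \<in> set (v # vs) then B va else \<sigma> va) \<phi>" by blast
    have "(\<lambda>u. if u \<in> set (v#vs) then B u else \<sigma> u) = (\<lambda>u. if u \<in> set vs then B u else (\<sigma>(v := B v)) u)"
      by (auto simp: fun_eq_iff)
    then have "sat M \<nu> (\<lambda>va. if va \<in> set vs then B va else (\<sigma>(v := B v)) va) \<phi>"
      using B(2) by simp
    moreover have "\<forall>u\<in>set vs. B u \<subseteq> univ M" using B(1) by simp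
    ultimately have "sat M \<nu> (\<sigma>(v := B v)) (exSs vs \<phi>)" unfolding Cons.IH[of "\<sigma>(v := B v)"] by blast
    then show "sat M \<nu> \<sigma> (exSs (v # vs) \<phi>)" using B(1)
      by (simp only: exSs.simps sat.simps) (meson list.set_intros(1))
  qed
qed



definition Bv :: "'f \<Rightarrow> 'f svar" where "Bv \<alpha> = SB (Suc (idx \<alpha>))"

lemma Bv_neq[simp]: "Bv \<alpha> \<noteq> SB 0" "Bv \<alpha> \<noteq> SX" "Bv \<alpha> \<noteq> SY i \<gamma>"
  by (auto simp: Bv_def)

lemma Bv_eq[simp]: "(Bv \<alpha> = Bv (\<beta>::'f::finite)) \<longleftrightarrow> \<alpha> = \<beta>"
  using inj_idx[where 'a='f] by (auto simp: Bv_def inj_def)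

definition iffF :: "('f,'v) cmso \<Rightarrow> ('f,'v) cmso \<Rightarrow> ('f,'v) cmso" where
  "iffF \<phi> \<psi> = Disj (Conj \<phi> \<psi>) (Conj (Neg \<phi>) (Neg \<psi>))"

lemma sat_iffF[simp]: "sat M \<nu> \<sigma> (iffF \<phi> \<psi>) \<longleftrightarrow> (sat M \<nu> \<sigma> \<phi> \<longleftrightarrow> sat M \<nu> \<sigma> \<psi>)"
  unfolding iffF_def by auto

definition countF :: "'f::{finite,field} \<Rightarrow> 'f \<Rightarrow> 'f \<Rightarrow> ('f,'f svar) cmso" where
  "countF \<alpha> \<beta> e = bigOr (map (\<lambda>j. ExS (SB 0) (Conj (All1 1 (iffF (AtMem 1 (SB 0))
      (Conj (AtMem 1 (Bv \<alpha>)) (AtEntry \<beta> 0 1)))) (AtMod j (dm TYPE('f)) (SB 0))))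
     (filter (\<lambda>j. of_nat j = e) [0..<dm TYPE('f)]))"

lemma set_char: "Z \<subseteq> U \<Longrightarrow> (\<forall>x\<in>U. (x \<in> Z) = P x) \<longleftrightarrow> Z = {x\<in>U. P x}"
  by auto

lemma sat_countF: "sat M \<nu> \<sigma> (countF (\<alpha>::'f::{finite,field}) \<beta> e) \<longleftrightarrow>
  (\<exists>j<dm TYPE('f::{finite,field}). of_nat j = e \<and>
     card {x\<in>univ M. x \<in> \<sigma> (Bv \<alpha>) \<and> (\<nu> 0, x) \<in> relEntry M \<beta>} mod dm TYPE('f) = j)"
proof -
  define Z0 where "Z0 = {x\<in>univ M. x \<in> \<sigma> (Bv \<alpha>) \<and> (\<nu> 0, x) \<in> relEntry M \<beta>}"
  have inner: "sat M \<nu> \<sigma> (ExS (SB 0) (Conj (All1 1 (iffF (AtMem 1 (SB 0))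
      (Conj (AtMem 1 (Bv \<alpha>)) (AtEntry \<beta> 0 1)))) (AtMod j (dm TYPE('f)) (SB 0))))
     \<longleftrightarrow> card Z0 mod dm TYPE('f) = j mod dm TYPE('f)" for j
  proof -
    have "sat M \<nu> \<sigma> (ExS (SB 0) (Conj (All1 1 (iffF (AtMem 1 (SB 0))
      (Conj (AtMem 1 (Bv \<alpha>)) (AtEntry \<beta> 0 1)))) (AtMod j (dm TYPE('f)) (SB 0))))
      \<longleftrightarrow> (\<exists>Z\<subseteq>univ M. (\<forall>x\<in>univ M. (x \<in> Z) = (x \<in> \<sigma> (Bv \<alpha>) \<and> (\<nu> 0, x) \<in> relEntry M \<beta>)) \<and>
        card Z mod dm TYPE('f) = j mod dm TYPE('f))"
      by (simp add: Bv_neq[symmetric])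
    also have "\<dots> \<longleftrightarrow> card Z0 mod dm TYPE('f) = j mod dm TYPE('f)"
    proof
      assume "\<exists>Z\<subseteq>univ M. (\<forall>x\<in>univ M. (x \<in> Z) = (x \<in> \<sigma> (Bv \<alpha>) \<and> (\<nu> 0, x) \<in> relEntry M \<beta>)) \<and>
        card Z mod dm TYPE('f) = j mod dm TYPE('f)"
      then obtain Z where "Z \<subseteq> univ M" "\<forall>x\<in>univ M. (x \<in> Z) = (x \<in> \<sigma> (Bv \<alpha>) \<and> (\<nu> 0, x) \<in> relEntry M \<beta>)"
        "card Z mod dm TYPE('f) = j mod dm TYPE('f)" by blast
      moreover then have "Z = Z0" unfolding Z0_def by blast
      ultimately show "card Z0 mod dm TYPE('f) = j mod dm TYPE('f)" by simp
    next
      assume "card Z0 mod dm TYPE('f) = j mod dm TYPE('f)"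
      then show "\<exists>Z\<subseteq>univ M. (\<forall>x\<in>univ M. (x \<in> Z) = (x \<in> \<sigma> (Bv \<alpha>) \<and> (\<nu> 0, x) \<in> relEntry M \<beta>)) \<and>
        card Z mod dm TYPE('f) = j mod dm TYPE('f)"
        by (intro exI[of _ Z0]) (auto simp: Z0_def)
    qed
    finally show ?thesis .
  qed
  have "sat M \<nu> \<sigma> (countF \<alpha> \<beta> e) \<longleftrightarrow> (\<exists>j\<in>set (filter (\<lambda>j. of_nat j = e) [0..<dm TYPE('f)]).
     card Z0 mod dm TYPE('f) = j mod dm TYPE('f))"
    unfolding countF_def sat_bigOr by (simp only: set_map bex_simps inner)
  also have "\<dots> \<longleftrightarrow> (\<exists>j<dm TYPE('f). of_nat j = e \<and> card Z0 mod dm TYPE('f) = j)"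
    by auto
  finally show ?thesis unfolding Z0_def .
qed

definition rowF :: "nat \<Rightarrow> 'f::{finite,field} list \<Rightarrow> ('f,'f svar) cmso" where
  "rowF k bs = bigOr (map (\<lambda>(gs,t). Conj (bigAnd (map (\<lambda>i. AtMem 0 (SY i (gs!i))) [0..<k]))
       (bigAnd (map (\<lambda>(\<alpha>,\<beta>). countF \<alpha> \<beta> (t \<alpha> \<beta>)) (List.product univ_list univ_list))))
     (filter (\<lambda>(gs,t). (\<Sum>\<alpha>\<in>UNIV. \<Sum>\<beta>\<in>UNIV. \<alpha>*\<beta>*t \<alpha> \<beta>) = (\<Sum>i<k. bs!i * gs!i))
        (List.product (List.n_lists k univ_list) univ_list)))"

lemma sat_rowF: "sat M \<nu> \<sigma> (rowF k bs) \<longleftrightarrow> (\<exists>gs t. length gs = k \<and>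
   (\<Sum>\<alpha>\<in>UNIV. \<Sum>\<beta>\<in>UNIV. \<alpha>*\<beta>*t \<alpha> \<beta>) = (\<Sum>i<k. bs!i * gs!i) \<and>
   (\<forall>i<k. \<nu> 0 \<in> \<sigma> (SY i (gs!i))) \<and> (\<forall>\<alpha> \<beta>. sat M \<nu> \<sigma> (countF \<alpha> \<beta> (t \<alpha> \<beta>))))" (is "_ \<longleftrightarrow> ?rhs")
proof -
  have "sat M \<nu> \<sigma> (rowF k bs) \<longleftrightarrow> (\<exists>gs t. length gs = k \<and>
   (\<Sum>\<alpha>\<in>UNIV. \<Sum>\<beta>\<in>UNIV. \<alpha>*\<beta>*t \<alpha> \<beta>) = (\<Sum>i<k. bs!i * gs!i) \<and>
   (\<forall>i\<in>set [0..<k]. \<nu> 0 \<in> \<sigma> (SY i (gs!i))) \<and> (\<forall>(\<alpha>, \<beta>)\<in>set (List.product univ_list univ_list). sat M \<nu> \<sigma> (countF \<alpha> \<beta> (t \<alpha> \<beta>))))"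
    unfolding rowF_def sat_bigOr set_map bex_simps set_filter
    by (simp add: set_n_lists split_def atLeastLessThan_iff)
  also have "\<dots> \<longleftrightarrow> ?rhs" by (simp add: atLeast0LessThan Ball_def)
  finally show ?thesis .
qed

definition wfF :: "('f::{finite,field},'f svar) cmso" where
  "wfF = Conj (bigAnd (map (\<lambda>\<alpha>. All1 1 (Disj (Neg (AtMem 1 (Bv \<alpha>))) (AtMem 1 SX))) univ_list))
     (Conj (bigAnd (map (\<lambda>(\<alpha>,\<beta>). All1 1 (Neg (Conj (AtMem 1 (Bv \<alpha>)) (AtMem 1 (Bv \<beta>)))))
        (filter (\<lambda>(\<alpha>,\<beta>). \<alpha> \<noteq> \<beta>) (List.product univ_list univ_list))))
      (All1 1 (Disj (Neg (AtMem 1 SX)) (bigOr (map (\<lambda>\<alpha>. AtMem 1 (Bv \<alpha>)) univ_list)))))"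

definition ntF :: "('f::{finite,field},'f svar) cmso" where
  "ntF = bigOr (map (\<lambda>\<alpha>. Ex1 1 (AtMem 1 (Bv \<alpha>))) (filter (\<lambda>\<alpha>. \<alpha> \<noteq> 0) univ_list))"

definition rowsF :: "nat \<Rightarrow> ('f::{finite,field},'f svar) cmso" where
  "rowsF k = bigOr (map (\<lambda>bs. All1 0 (Disj (Neg (AtR 0)) (rowF k bs))) (List.n_lists k univ_list))"

definition DepF :: "nat \<Rightarrow> ('f::{finite,field},'f svar) cmso" where
  "DepF k = exSs (map Bv univ_list) (Conj wfF (Conj ntF (rowsF k)))"

lemma sat_body: assumes "\<And>\<alpha>. \<sigma> (Bv \<alpha>) = B \<alpha>"
  shows "sat M \<nu> \<sigma> (Conj wfF (Conj ntF (rowsF k))) \<longleftrightarrow>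
 (\<forall>\<alpha>. \<forall>x\<in>univ M. x\<in>B \<alpha> \<longrightarrow> x\<in>\<sigma> SX) \<and>
 (\<forall>\<alpha> \<beta>. \<alpha>\<noteq>\<beta> \<longrightarrow> (\<forall>x\<in>univ M. \<not>(x\<in>B \<alpha> \<and> x\<in>B \<beta>))) \<and>
 (\<forall>x\<in>univ M. x\<in>\<sigma> SX \<longrightarrow> (\<exists>\<alpha>. x\<in>B \<alpha>)) \<and>
 (\<exists>\<alpha>::'f::{finite,field}. \<alpha>\<noteq>0 \<and> (\<exists>x\<in>univ M. x\<in>B \<alpha>)) \<and>
 (\<exists>bs. length bs = k \<and> (\<forall>r\<in>univ M. r\<in>relR M \<longrightarrow> (\<exists>gs t. length gs = k \<and>
     (\<Sum>\<alpha>\<in>UNIV. \<Sum>\<beta>\<in>UNIV. \<alpha>*\<beta>*t \<alpha> \<beta>) = (\<Sum>i<k. bs!i*gs!i) \<and>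
     (\<forall>i<k. r \<in> \<sigma> (SY i (gs!i))) \<and>
     (\<forall>\<alpha> \<beta>. \<exists>j<dm TYPE('f). of_nat j = t \<alpha> \<beta> \<and>
        card {x\<in>univ M. x\<in>B \<alpha> \<and> (r,x)\<in>relEntry M \<beta>} mod dm TYPE('f) = j))))"
  unfolding wfF_def ntF_def rowsF_def
  by (simp add: sat_rowF sat_countF assms set_n_lists)



definition bodyP :: "(elem, 'f::{finite,field}) sigma_struct \<Rightarrow> (nat \<Rightarrow> elem) \<Rightarrow> ('f svar \<Rightarrow> elem set) \<Rightarrow> nat \<Rightarrow> ('f \<Rightarrow> elem set) \<Rightarrow> bool" where
 "bodyP M \<nu> \<sigma> k B \<longleftrightarrow>
 (\<forall>\<alpha>. \<forall>x\<in>univ M. x\<in>B \<alpha> \<longrightarrow> x\<in>\<sigma> SX) \<and>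
 (\<forall>\<alpha> \<beta>. \<alpha>\<noteq>\<beta> \<longrightarrow> (\<forall>x\<in>univ M. \<not>(x\<in>B \<alpha> \<and> x\<in>B \<beta>))) \<and>
 (\<forall>x\<in>univ M. x\<in>\<sigma> SX \<longrightarrow> (\<exists>\<alpha>. x\<in>B \<alpha>)) \<and>
 (\<exists>\<alpha>::'f. \<alpha>\<noteq>0 \<and> (\<exists>x\<in>univ M. x\<in>B \<alpha>)) \<and>
 (\<exists>bs. length bs = k \<and> (\<forall>r\<in>univ M. r\<in>relR M \<longrightarrow> (\<exists>gs t. length gs = k \<and>
     (\<Sum>\<alpha>\<in>UNIV. \<Sum>\<beta>\<in>UNIV. \<alpha>*\<beta>*t \<alpha> \<beta>) = (\<Sum>i<k. bs!i*gs!i) \<and>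
     (\<forall>i<k. r \<in> \<sigma> (SY i (gs!i))) \<and>
     (\<forall>\<alpha> \<beta>. \<exists>j<dm TYPE('f). of_nat j = t \<alpha> \<beta> \<and>
        card {x\<in>univ M. x\<in>B \<alpha> \<and> (r,x)\<in>relEntry M \<beta>} mod dm TYPE('f) = j))))"

lemma sat_DepF: "sat M \<nu> \<sigma> (DepF k) \<longleftrightarrow> (\<exists>B::'f::{finite,field} \<Rightarrow> elem set. (\<forall>\<alpha>. B \<alpha> \<subseteq> univ M) \<and> bodyP M \<nu> \<sigma> k B)"
proof -
  let ?V = "set (map Bv (univ_list::'f list))"
  have upd: "bodyP M \<nu> (\<lambda>v. if v \<in> ?V then B' v else \<sigma> v) k B = bodyP M \<nu> \<sigma> k B" for B' B
  proof -
    have 1: "(\<lambda>v. if v \<in> ?V then B' v else \<sigma> v) SX = \<sigma> SX" by (auto simp: Bv_neq[symmetric])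
    have 2: "(\<lambda>v. if v \<in> ?V then B' v else \<sigma> v) (SY i \<gamma>) = \<sigma> (SY i \<gamma>)" for i \<gamma>
      by (auto simp: Bv_neq[symmetric])
    show ?thesis unfolding bodyP_def by (simp only: 1 2)
  qed
  have "sat M \<nu> \<sigma> (DepF k) \<longleftrightarrow> (\<exists>B'. (\<forall>v\<in>?V. B' v \<subseteq> univ M) \<and>
     sat M \<nu> (\<lambda>v. if v \<in> ?V then B' v else \<sigma> v) (Conj wfF (Conj ntF (rowsF k))))"
    unfolding DepF_def sat_exSs ..
  also have "\<dots> \<longleftrightarrow> (\<exists>B'. (\<forall>\<alpha>. B' (Bv \<alpha>) \<subseteq> univ M) \<and> bodyP M \<nu> \<sigma> k (\<lambda>\<alpha>. B' (Bv \<alpha>)))"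
  proof -
    have "sat M \<nu> (\<lambda>v. if v \<in> ?V then B' v else \<sigma> v) (Conj wfF (Conj ntF (rowsF k)))
       \<longleftrightarrow> bodyP M \<nu> (\<lambda>v. if v \<in> ?V then B' v else \<sigma> v) k (\<lambda>\<alpha>. B' (Bv \<alpha>))" for B'
      unfolding bodyP_def by (rule sat_body) simp
    moreover have "(\<forall>v\<in>?V. B' v \<subseteq> univ M) \<longleftrightarrow> (\<forall>\<alpha>. B' (Bv \<alpha>) \<subseteq> univ M)" for B'
      by auto
    ultimately show ?thesis by (simp only: upd)
  qed
  also have "\<dots> \<longleftrightarrow> (\<exists>B::'f \<Rightarrow> elem set. (\<forall>\<alpha>. B \<alpha> \<subseteq> univ M) \<and> bodyP M \<nu> \<sigma> k B)"
  proof
    assume "\<exists>B'. (\<forall>\<alpha>. B' (Bv \<alpha>) \<subseteq> univ M) \<and> bodyP M \<nu> \<sigma> k (\<lambda>\<alpha>. B' (Bv \<alpha>))"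
    then obtain B' where "\<forall>\<alpha>. B' (Bv \<alpha>) \<subseteq> univ M" "bodyP M \<nu> \<sigma> k (\<lambda>\<alpha>. B' (Bv \<alpha>))" by blast
    then show "\<exists>B::'f \<Rightarrow> elem set. (\<forall>\<alpha>. B \<alpha> \<subseteq> univ M) \<and> bodyP M \<nu> \<sigma> k B"
      by (intro exI[of _ "\<lambda>\<alpha>. B' (Bv \<alpha>)"]) simp
  next
    assume "\<exists>B::'f \<Rightarrow> elem set. (\<forall>\<alpha>. B \<alpha> \<subseteq> univ M) \<and> bodyP M \<nu> \<sigma> k B"
    then obtain B :: "'f \<Rightarrow> elem set" where B: "\<forall>\<alpha>. B \<alpha> \<subseteq> univ M" "bodyP M \<nu> \<sigma> k B" by blast
    define B' :: "'f svar \<Rightarrow> elem set" where "B' = (\<lambda>v. case v of SB (Suc j) \<Rightarrow> B (inv idx j) | _ \<Rightarrow> {})"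
    have Bq: "B' (Bv \<alpha>) = B \<alpha>" for \<alpha> :: 'f
      unfolding B'_def Bv_def by (simp add: inv_f_f[OF inj_idx[where 'a='f]])
    then have "(\<lambda>\<alpha>. B' (Bv \<alpha>)) = B" by auto
    then show "\<exists>B'. (\<forall>\<alpha>. B' (Bv \<alpha>) \<subseteq> univ M) \<and> bodyP M \<nu> \<sigma> k (\<lambda>\<alpha>. B' (Bv \<alpha>))"
      using B by (intro exI[of _ B']) (simp add: Bq)
  qed
  finally show ?thesis .
qed

lemma sum_ind: "finite S \<Longrightarrow> (\<Sum>c\<in>S. if P c then k else 0) = of_nat (card {c\<in>S. P c}) * (k::'a::semiring_1)"
  by (simp add: sum.If_cases Int_def)

lemma row_sum:
  assumes "finite S"
  shows "(\<Sum>c\<in>S. a c * A r c) = (\<Sum>\<alpha>\<in>UNIV. \<Sum>\<beta>\<in>UNIV. \<alpha>*\<beta>*of_nat (card {c\<in>S. a c = \<alpha> \<and> A r c = \<beta>}) :: 'f::{finite,field})"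
proof -
  have e: "(\<Sum>\<alpha>\<in>UNIV. \<Sum>\<beta>\<in>UNIV. if x = \<alpha> \<and> y = \<beta> then \<alpha>*\<beta> else (0::'f)) = x*y" for x y
  proof -
    have "(\<Sum>\<alpha>\<in>UNIV. \<Sum>\<beta>\<in>UNIV. if x = \<alpha> \<and> y = \<beta> then \<alpha>*\<beta> else (0::'f))
       = (\<Sum>\<alpha>\<in>UNIV. if x = \<alpha> then (\<Sum>\<beta>\<in>UNIV. if y = \<beta> then \<alpha>*\<beta> else 0) else 0)"
      by (rule sum.cong) auto
    then show ?thesis by simp
  qed
  have "(\<Sum>c\<in>S. a c * A r c) = (\<Sum>c\<in>S. \<Sum>\<alpha>\<in>UNIV. \<Sum>\<beta>\<in>UNIV. if a c = \<alpha> \<and> A r c = \<beta> then \<alpha>*\<beta> else 0)"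
    by (simp only: e)
  also have "\<dots> = (\<Sum>\<alpha>\<in>UNIV. \<Sum>\<beta>\<in>UNIV. \<Sum>c\<in>S. if a c = \<alpha> \<and> A r c = \<beta> then \<alpha>*\<beta> else 0)"
    by (simp add: sum.swap[of _ S])
  also have "\<dots> = (\<Sum>\<alpha>\<in>UNIV. \<Sum>\<beta>\<in>UNIV. \<alpha>*\<beta>*of_nat (card {c\<in>S. a c = \<alpha> \<and> A r c = \<beta>}))"
    using assms by (simp add: sum_ind mult.commute)
  finally show ?thesis .
qed

lemma vvec_eq: "virtual_column m Q \<Longrightarrow> Row r \<in> Q \<gamma> \<Longrightarrow> vvec Q r = \<gamma>"
  unfolding virtual_column_def vvec_def by (rule the_equality) blast+

lemma vc_ex: "virtual_column m Q \<Longrightarrow> r < m \<Longrightarrow> Row r \<in> Q (vvec Q r)"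
proof -
  assume vc: "virtual_column m Q" and r: "r < m"
  then have "Row r \<in> (\<Union>\<alpha>. Q \<alpha>)" unfolding virtual_column_def by auto
  then obtain \<gamma> where "Row r \<in> Q \<gamma>" by blast
  then show ?thesis using vvec_eq[OF vc] by simp
qed

lemma card_Z:
  assumes "B = Col ` {c\<in>S. a c = \<alpha>}" "S \<subseteq> {..<n}" "r < m"
  shows "card {x\<in>univ (matrix_struct m n A). x\<in>B \<and> (Row r,x)\<in>relEntry (matrix_struct m n A) \<beta>}
     = card {c\<in>S. a c = \<alpha> \<and> A r c = \<beta>}"
proof -
  have "{x\<in>univ (matrix_struct m n A). x\<in>B \<and> (Row r,x)\<in>relEntry (matrix_struct m n A) \<beta>}
     = Col ` {c\<in>S. a c = \<alpha> \<and> A r c = \<beta>}"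
    using assms by (auto simp: matrix_struct_def)
  moreover have "inj Col" by (simp add: inj_def)
  ultimately show ?thesis by (simp add: card_image inj_on_subset)
qed



theorem lemma9:
  fixes k :: nat
  shows "\<exists>Dep :: ('f::{finite,field}, 'f svar) cmso.
    \<forall>(m::nat) (n::nat) (A :: nat \<Rightarrow> nat \<Rightarrow> 'f) (S :: nat set)
      (Q :: nat \<Rightarrow> 'f \<Rightarrow> elem set) (\<nu> :: nat \<Rightarrow> elem) (\<sigma> :: 'f svar \<Rightarrow> elem set).
      S \<subseteq> {..<n} \<and> (\<forall>i<k. virtual_column m (Q i)) \<and>
      \<sigma> SX = Col ` S \<and> (\<forall>i<k. \<forall>\<alpha>. \<sigma> (SY i \<alpha>) = Q i \<alpha>)
      \<longrightarrow> (dependent_wrt m A S (\<lambda>i. vvec (Q i)) k \<longleftrightarrow> sat (matrix_struct m n A) \<nu> \<sigma> Dep)"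
proof (intro exI[of _ "DepF k"] allI impI)
  fix m n :: nat and A :: "nat \<Rightarrow> nat \<Rightarrow> 'f" and S :: "nat set" and Q :: "nat \<Rightarrow> 'f \<Rightarrow> elem set"
    and \<nu> :: "nat \<Rightarrow> elem" and \<sigma> :: "'f svar \<Rightarrow> elem set"
  assume H: "S \<subseteq> {..<n} \<and> (\<forall>i<k. virtual_column m (Q i)) \<and>
      \<sigma> SX = Col ` S \<and> (\<forall>i<k. \<forall>\<alpha>. \<sigma> (SY i \<alpha>) = Q i \<alpha>)"
  then have Sn: "S \<subseteq> {..<n}" and vc: "\<And>i. i < k \<Longrightarrow> virtual_column m (Q i)"
    and SX: "\<sigma> SX = Col ` S" and SY: "\<And>i \<alpha>. i < k \<Longrightarrow> \<sigma> (SY i \<alpha>) = Q i \<alpha>" by auto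
  have finS: "finite S" using Sn finite_subset by blast
  let ?M = "matrix_struct m n A"
  let ?d = "dm TYPE('f)"
  have univM: "univ ?M = Row ` {..<m} \<union> Col ` {..<n}" and relRM: "relR ?M = Row ` {..<m}"
    by (simp_all add: matrix_struct_def)
  show "dependent_wrt m A S (\<lambda>i. vvec (Q i)) k \<longleftrightarrow> sat ?M \<nu> \<sigma> (DepF k)"
  proof
    assume "dependent_wrt m A S (\<lambda>i. vvec (Q i)) k"
    then obtain a b c0 where c0: "c0 \<in> S" "a c0 \<noteq> 0"
      and ab: "\<forall>r<m. (\<Sum>c\<in>S. a c * A r c) = (\<Sum>i<k. b i * vvec (Q i) r)"
      unfolding dependent_wrt_def by blast
    define B where "B \<alpha> = Col ` {c\<in>S. a c = \<alpha>}" for \<alpha>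
    have Bu: "\<forall>\<alpha>. B \<alpha> \<subseteq> univ ?M" using Sn by (auto simp: B_def univM)
    have "bodyP ?M \<nu> \<sigma> k B"
      unfolding bodyP_def
    proof (intro conjI)
      show "\<forall>\<alpha>. \<forall>x\<in>univ ?M. x \<in> B \<alpha> \<longrightarrow> x \<in> \<sigma> SX" by (auto simp: B_def SX)
      show "\<forall>\<alpha> \<beta>. \<alpha> \<noteq> \<beta> \<longrightarrow> (\<forall>x\<in>univ ?M. \<not> (x \<in> B \<alpha> \<and> x \<in> B \<beta>))" by (auto simp: B_def)
      show "\<forall>x\<in>univ ?M. x \<in> \<sigma> SX \<longrightarrow> (\<exists>\<alpha>. x \<in> B \<alpha>)" by (auto simp: B_def SX)
      show "\<exists>\<alpha>::'f. \<alpha> \<noteq> 0 \<and> (\<exists>x\<in>univ ?M. x \<in> B \<alpha>)"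
        using c0 Sn by (intro exI[of _ "a c0"]) (auto simp: B_def univM)
      show "\<exists>bs. length bs = k \<and> (\<forall>r\<in>univ ?M. r \<in> relR ?M \<longrightarrow> (\<exists>gs t. length gs = k \<and>
     (\<Sum>\<alpha>\<in>UNIV. \<Sum>\<beta>\<in>UNIV. \<alpha>*\<beta>*t \<alpha> \<beta>) = (\<Sum>i<k. bs!i*gs!i) \<and>
     (\<forall>i<k. r \<in> \<sigma> (SY i (gs!i))) \<and>
     (\<forall>\<alpha> \<beta>. \<exists>j<?d. of_nat j = t \<alpha> \<beta> \<and>
        card {x\<in>univ ?M. x\<in>B \<alpha> \<and> (r,x)\<in>relEntry ?M \<beta>} mod ?d = j)))"
      proof (rule exI[of _ "map b [0..<k]"], intro conjI ballI impI)
        show "length (map b [0..<k]) = k" by simp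
        fix r assume "r \<in> univ ?M" "r \<in> relR ?M"
        then obtain r' where r': "r = Row r'" "r' < m" by (auto simp: relRM)
        define gs where "gs = map (\<lambda>i. vvec (Q i) r') [0..<k]"
        define t where "t \<alpha> \<beta> = (of_nat (card {c\<in>S. a c = \<alpha> \<and> A r' c = \<beta>}) :: 'f)" for \<alpha> \<beta>
        show "\<exists>gs t. length gs = k \<and>
     (\<Sum>\<alpha>\<in>UNIV. \<Sum>\<beta>\<in>UNIV. \<alpha>*\<beta>*t \<alpha> \<beta>) = (\<Sum>i<k. map b [0..<k]!i*gs!i) \<and>
     (\<forall>i<k. r \<in> \<sigma> (SY i (gs!i))) \<and>
     (\<forall>\<alpha> \<beta>. \<exists>j<?d. of_nat j = t \<alpha> \<beta> \<and>
        card {x\<in>univ ?M. x\<in>B \<alpha> \<and> (r,x)\<in>relEntry ?M \<beta>} mod ?d = j)"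
        proof (intro exI[of _ gs] exI[of _ t] conjI allI impI)
          show "length gs = k" by (simp add: gs_def)
          have "(\<Sum>\<alpha>\<in>UNIV. \<Sum>\<beta>\<in>UNIV. \<alpha>*\<beta>*t \<alpha> \<beta>) = (\<Sum>c\<in>S. a c * A r' c)"
            unfolding t_def by (rule row_sum[OF finS, symmetric])
          also have "\<dots> = (\<Sum>i<k. b i * vvec (Q i) r')" using ab r' by simp
          also have "\<dots> = (\<Sum>i<k. map b [0..<k]!i*gs!i)" by (simp add: gs_def)
          finally show "(\<Sum>\<alpha>\<in>UNIV. \<Sum>\<beta>\<in>UNIV. \<alpha>*\<beta>*t \<alpha> \<beta>) = (\<Sum>i<k. map b [0..<k]!i*gs!i)" .
        next
          fix i assume i: "i < k"
          show "r \<in> \<sigma> (SY i (gs!i))" using vc_ex[OF vc[OF i] r'(2)] i r' SY[OF i] by (simp add: gs_def)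
        next
          fix \<alpha> \<beta> :: 'f
          have cz: "card {x\<in>univ ?M. x\<in>B \<alpha> \<and> (r,x)\<in>relEntry ?M \<beta>} = card {c\<in>S. a c = \<alpha> \<and> A r' c = \<beta>}"
            unfolding r'(1) by (rule card_Z[OF B_def Sn r'(2)])
          show "\<exists>j<?d. of_nat j = t \<alpha> \<beta> \<and>
             card {x\<in>univ ?M. x\<in>B \<alpha> \<and> (r,x)\<in>relEntry ?M \<beta>} mod ?d = j"
            using dm_pos[where 'a='f]
            by (intro exI[of _ "card {c\<in>S. a c = \<alpha> \<and> A r' c = \<beta>} mod ?d"])
               (simp add: cz t_def of_nat_mod_dm)
        qed
      qed
    qed
    then show "sat ?M \<nu> \<sigma> (DepF k)" using Bu sat_DepF by blast
  next
    assume "sat ?M \<nu> \<sigma> (DepF k)"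
    then obtain B :: "'f \<Rightarrow> elem set" where Bu: "\<forall>\<alpha>. B \<alpha> \<subseteq> univ ?M" and bp: "bodyP ?M \<nu> \<sigma> k B"
      using sat_DepF by blast
    note bp' = bp[unfolded bodyP_def]
    have BS: "B \<alpha> \<subseteq> Col ` S" for \<alpha> using bp' Bu SX by blast
    have cov: "\<exists>\<alpha>. Col c \<in> B \<alpha>" if "c \<in> S" for c
      using bp' that Sn SX by (auto simp: univM)
    have disj: "\<alpha> = \<beta>" if "x \<in> B \<alpha>" "x \<in> B \<beta>" for x \<alpha> \<beta>
      using bp' Bu that by blast
    define a where "a c = (SOME \<alpha>. Col c \<in> B \<alpha>)" for c
    have aB: "Col c \<in> B (a c)" if "c \<in> S" for c
      unfolding a_def using cov[OF that] by (rule someI_ex)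
    have Beq: "B \<alpha> = Col ` {c\<in>S. a c = \<alpha>}" for \<alpha>
    proof
      show "B \<alpha> \<subseteq> Col ` {c\<in>S. a c = \<alpha>}"
      proof
        fix x assume x: "x \<in> B \<alpha>"
        then obtain c where c: "c \<in> S" "x = Col c" using BS by blast
        then have "a c = \<alpha>" using disj[OF aB[OF c(1)]] x by blast
        then show "x \<in> Col ` {c\<in>S. a c = \<alpha>}" using c by blast
      qed
      show "Col ` {c\<in>S. a c = \<alpha>} \<subseteq> B \<alpha>" using aB by auto
    qed
    obtain \<alpha>0 x0 where a0: "\<alpha>0 \<noteq> 0" "x0 \<in> B \<alpha>0" using bp' by blast
    then obtain c0 where c0: "c0 \<in> S" "a c0 = \<alpha>0" using Beq by blast
    obtain bs where bs: "length bs = k" and rows: "\<forall>r\<in>univ ?M. r\<in>relR ?M \<longrightarrow> (\<exists>gs t. length gs = k \<and>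
     (\<Sum>\<alpha>\<in>UNIV. \<Sum>\<beta>\<in>UNIV. \<alpha>*\<beta>*t \<alpha> \<beta>) = (\<Sum>i<k. bs!i*gs!i) \<and>
     (\<forall>i<k. r \<in> \<sigma> (SY i (gs!i))) \<and>
     (\<forall>\<alpha> \<beta>. \<exists>j<?d. of_nat j = t \<alpha> \<beta> \<and>
        card {x\<in>univ ?M. x\<in>B \<alpha> \<and> (r,x)\<in>relEntry ?M \<beta>} mod ?d = j))"
      using bp' by blast
    have "\<forall>r<m. (\<Sum>c\<in>S. a c * A r c) = (\<Sum>i<k. (\<lambda>i. bs!i) i * vvec (Q i) r)"
    proof (intro allI impI)
      fix r assume r: "r < m"
      have "Row r \<in> univ ?M" "Row r \<in> relR ?M" using r by (auto simp: univM relRM)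
      then obtain gs t where gs: "length gs = k"
        and sm: "(\<Sum>\<alpha>\<in>UNIV. \<Sum>\<beta>\<in>UNIV. \<alpha>*\<beta>*t \<alpha> \<beta>) = (\<Sum>i<k. bs!i*gs!i)"
        and mem: "\<forall>i<k. Row r \<in> \<sigma> (SY i (gs!i))"
        and ct: "\<forall>\<alpha> \<beta>. \<exists>j<?d. of_nat j = t \<alpha> \<beta> \<and>
        card {x\<in>univ ?M. x\<in>B \<alpha> \<and> (Row r,x)\<in>relEntry ?M \<beta>} mod ?d = j"
        using rows by blast
      have tq: "t \<alpha> \<beta> = of_nat (card {c\<in>S. a c = \<alpha> \<and> A r c = \<beta>})" for \<alpha> \<beta>
      proof -
        obtain j where j: "of_nat j = t \<alpha> \<beta>" "card {x\<in>univ ?M. x\<in>B \<alpha> \<and> (Row r,x)\<in>relEntry ?M \<beta>} mod ?d = j"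
          using ct by blast
        have "card {x\<in>univ ?M. x\<in>B \<alpha> \<and> (Row r,x)\<in>relEntry ?M \<beta>} = card {c\<in>S. a c = \<alpha> \<and> A r c = \<beta>}"
          by (rule card_Z[OF Beq Sn r])
        then show ?thesis using j of_nat_mod_dm[where 'a='f] by metis
      qed
      have vv: "vvec (Q i) r = gs!i" if "i < k" for i
        using vvec_eq[OF vc[OF that]] mem SY that by auto
      have "(\<Sum>c\<in>S. a c * A r c) = (\<Sum>\<alpha>\<in>UNIV. \<Sum>\<beta>\<in>UNIV. \<alpha>*\<beta>*t \<alpha> \<beta>)"
        unfolding tq by (rule row_sum[OF finS])
      also have "\<dots> = (\<Sum>i<k. bs!i*gs!i)" by (rule sm)
      also have "\<dots> = (\<Sum>i<k. bs!i * vvec (Q i) r)" by (rule sum.cong) (simp_all add: vv)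
      finally show "(\<Sum>c\<in>S. a c * A r c) = (\<Sum>i<k. (\<lambda>i. bs!i) i * vvec (Q i) r)" by simp
    qed
    then show "dependent_wrt m A S (\<lambda>i. vvec (Q i)) k"
      unfolding dependent_wrt_def using c0 a0 by blast
  qed
qed


end
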